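(* Let $n,r$ be integers with $n\ge r+2\ge 2$. For each $i\in\{1,\dots,n-1\}$, the subgroup of $K$ generated by $x^{(i)}_1,\dots,x^{(i)}_r$ is a free group. The subgroup of $K$ generated by $x^{(1)}_1,x^{(2)}_2,\dots,x^{(r)}_r$ is a free group.
   Context: For $\alpha\in\{1,\dots,n\}$ let $F^{(\alpha)}$ be the free group on $a^{(\alpha)}_1,\dots,a^{(\alpha)}_r$, let $\psi\colon F^{(1)}\times\cdots\times F^{(n)}\to\mathbb Z^r$ send each $a^{(\alpha)}_j$ to the standard basis vector $e_j$, and $K=\ker\psi$. For $\alpha\in\{1,\dots,n-1\}$, $j\in\{1,\dots,r\}$, $x^{(\alpha)}_j=a^{(\alpha)}_j(a^{(n)}_j)^{-1}\in K$. *)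

theory Defs
  imports "HOL-Algebra.Algebra"
begin

text \<open>A word over an alphabet 'a is a list of letters (x, e); e = True means x, e = False means x^-1.
  A word is reduced if no letter is immediately followed by its inverse.\<close>

fun reduced_word :: "('a \<times> bool) list \<Rightarrow> bool" where
  "reduced_word [] = True"
| "reduced_word [_] = True"
| "reduced_word ((x, e) # (y, f) # ws) = (\<not> (x = y \<and> e \<noteq> f) \<and> reduced_word ((y, f) # ws))"

definition word_eval :: "('a, 'b) monoid_scheme \<Rightarrow> ('a \<times> bool) list \<Rightarrow> 'a" where
  "word_eval G ws = foldr (\<lambda>(x, e) acc. (if e then x else inv\<^bsub>G\<^esub> x) \<otimes>\<^bsub>G\<^esub> acc) ws \<one>\<^bsub>G\<^esub>"

definition free_basis :: "('a, 'b) monoid_scheme \<Rightarrow> 'a set \<Rightarrow> bool" where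
  "free_basis G B \<longleftrightarrow> B \<subseteq> carrier G \<and> generate G B = carrier G \<and>
     (\<forall>ws. ws \<noteq> [] \<and> set ws \<subseteq> B \<times> UNIV \<and> reduced_word ws \<longrightarrow> word_eval G ws \<noteq> \<one>\<^bsub>G\<^esub>)"

definition is_free_group :: "('a, 'b) monoid_scheme \<Rightarrow> bool" where
  "is_free_group G \<longleftrightarrow> group G \<and> (\<exists>B. free_basis G B)"

definition letter_inv :: "nat \<times> bool \<Rightarrow> nat \<times> bool" where
  "letter_inv l = (fst l, \<not> snd l)"

fun cons_red :: "nat \<times> bool \<Rightarrow> (nat \<times> bool) list \<Rightarrow> (nat \<times> bool) list" where
  "cons_red l [] = [l]"
| "cons_red l (m # ws) = (if m = letter_inv l then ws else l # m # ws)"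

definition word_mult :: "(nat \<times> bool) list \<Rightarrow> (nat \<times> bool) list \<Rightarrow> (nat \<times> bool) list" where
  "word_mult v w = foldr cons_red v w"

definition free_grp :: "nat \<Rightarrow> (nat \<times> bool) list monoid" where
  "free_grp r = \<lparr>carrier = {w. set w \<subseteq> {1..r} \<times> UNIV \<and> reduced_word w},
                 monoid.mult = word_mult, one = []\<rparr>"

definition FP :: "nat \<Rightarrow> nat \<Rightarrow> (nat \<Rightarrow> (nat \<times> bool) list) monoid" where
  "FP n r = product_group {1..n} (\<lambda>_. free_grp r)"

definition gen_a :: "nat \<Rightarrow> nat \<Rightarrow> nat \<Rightarrow> (nat \<Rightarrow> (nat \<times> bool) list)" where
  "gen_a n alpha j = (\<lambda>beta\<in>{1..n}. if beta = alpha then [(j, True)] else [])"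

definition exp_sum :: "nat \<Rightarrow> (nat \<times> bool) list \<Rightarrow> int" where
  "exp_sum j w = (\<Sum>l\<leftarrow>w. if fst l = j then (if snd l then 1 else -1) else 0)"

text \<open>psi : F^(1) x ... x F^(n) -> Z^r, a^(alpha)_j |-> e_j; elements of Z^r as functions {1..r} -> int.\<close>
definition psi :: "nat \<Rightarrow> nat \<Rightarrow> (nat \<Rightarrow> (nat \<times> bool) list) \<Rightarrow> nat \<Rightarrow> int" where
  "psi n r g = (\<lambda>j\<in>{1..r}. \<Sum>alpha\<in>{1..n}. exp_sum j (g alpha))"

definition Kset :: "nat \<Rightarrow> nat \<Rightarrow> (nat \<Rightarrow> (nat \<times> bool) list) set" where
  "Kset n r = {g \<in> carrier (FP n r). psi n r g = (\<lambda>j\<in>{1..r}. 0)}"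

definition Kgrp :: "nat \<Rightarrow> nat \<Rightarrow> (nat \<Rightarrow> (nat \<times> bool) list) monoid" where
  "Kgrp n r = (FP n r)\<lparr>carrier := Kset n r\<rparr>"

definition gen_x :: "nat \<Rightarrow> nat \<Rightarrow> nat \<Rightarrow> nat \<Rightarrow> (nat \<Rightarrow> (nat \<times> bool) list)" where
  "gen_x n r alpha j = gen_a n alpha j \<otimes>\<^bsub>FP n r\<^esub> inv\<^bsub>FP n r\<^esub> (gen_a n n j)"

end

theory Submission
  imports Defs
begin


lemma reduced_tail: "reduced_word (m # ws) \<Longrightarrow> reduced_word ws"
  by (cases m; cases ws) auto

lemma cons_red_reduced: "reduced_word w \<Longrightarrow> reduced_word (cons_red l w)"
proof (cases w)
  case (Cons m ws)
  assume "reduced_word w"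
  then show ?thesis using Cons
    by (cases l; cases m) (auto simp: letter_inv_def intro: reduced_tail)
qed simp

lemma cons_red_cancel: "reduced_word x \<Longrightarrow> cons_red l (cons_red (letter_inv l) x) = x"
proof (cases x)
  case (Cons m xs)
  assume r: "reduced_word x"
  show ?thesis
  proof (cases "m = l")
    case True
    then show ?thesis using r Cons
      by (cases xs; cases l) (auto simp: letter_inv_def)
  next
    case False
    then show ?thesis using Cons by (auto simp: letter_inv_def)
  qed
qed (simp add: letter_inv_def)

lemma word_mult_Nil[simp]: "word_mult [] w = w"
  by (simp add: word_mult_def)

lemma word_mult_Cons[simp]: "word_mult (a # v) w = cons_red a (word_mult v w)"
  by (simp add: word_mult_def)

lemma word_mult_append: "word_mult (xs @ ys) w = word_mult xs (word_mult ys w)"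
  by (simp add: word_mult_def)

lemma word_mult_reduced: "reduced_word w \<Longrightarrow> reduced_word (word_mult v w)"
  by (induction v) (auto intro: cons_red_reduced)

lemma cons_red_set: "set (cons_red l w) \<subseteq> insert l (set w)"
  by (cases w) auto

lemma word_mult_set: "set v \<subseteq> A \<Longrightarrow> set w \<subseteq> A \<Longrightarrow> set (word_mult v w) \<subseteq> A"
  by (induction v) (use cons_red_set in fastforce)+

lemma word_mult_cons_red:
  assumes "reduced_word w"
  shows "word_mult (cons_red l v) w = cons_red l (word_mult v w)"
proof (cases v)
  case (Cons m vs)
  show ?thesis
  proof (cases "m = letter_inv l")
    case True
    have "cons_red l (cons_red (letter_inv l) (word_mult vs w)) = word_mult vs w"
      by (rule cons_red_cancel[OF word_mult_reduced[OF assms]])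
    then show ?thesis using Cons True by simp
  qed (use Cons in simp)
qed simp

lemma word_mult_assoc:
  "reduced_word w \<Longrightarrow> word_mult (word_mult u v) w = word_mult u (word_mult v w)"
  by (induction u) (simp_all add: word_mult_cons_red)

lemma letter_inv_inv[simp]: "letter_inv (letter_inv a) = a"
  by (simp add: letter_inv_def)

lemma word_mult_inv: "word_mult (rev (map letter_inv u)) u = []"
proof (induction u)
  case (Cons a u)
  have "word_mult (rev (map letter_inv (a # u))) (a # u)
        = word_mult (rev (map letter_inv u)) (cons_red (letter_inv a) (a # u))"
    by (simp add: word_mult_append)
  also have "cons_red (letter_inv a) (a # u) = u" by simp
  finally show ?case using Cons by simp
qed simp

lemma foldr_cons_red_Nil: "reduced_word w \<Longrightarrow> foldr cons_red w [] = w"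
proof (induction w)
  case (Cons a w)
  then have IH: "foldr cons_red w [] = w" using reduced_tail by blast
  show ?case
  proof (cases w)
    case (Cons m ws)
    then have "m \<noteq> letter_inv a" using \<open>reduced_word (a # w)\<close>
      by (cases a; cases m) (auto simp: letter_inv_def)
    then show ?thesis using IH Cons by simp
  qed simp
qed simp

lemma group_free_grp: "group (free_grp r)"
proof (rule groupI)
  fix x y assume "x \<in> carrier (free_grp r)" "y \<in> carrier (free_grp r)"
  then show "x \<otimes>\<^bsub>free_grp r\<^esub> y \<in> carrier (free_grp r)"
    using word_mult_set[of x "{1..r} \<times> UNIV" y]
    by (auto simp: free_grp_def intro: word_mult_reduced)
next
  show "\<one>\<^bsub>free_grp r\<^esub> \<in> carrier (free_grp r)" by (simp add: free_grp_def)
next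
  fix x y z assume "x \<in> carrier (free_grp r)" "y \<in> carrier (free_grp r)" "z \<in> carrier (free_grp r)"
  then show "x \<otimes>\<^bsub>free_grp r\<^esub> y \<otimes>\<^bsub>free_grp r\<^esub> z = x \<otimes>\<^bsub>free_grp r\<^esub> (y \<otimes>\<^bsub>free_grp r\<^esub> z)"
    by (simp add: free_grp_def word_mult_assoc)
next
  fix x assume "x \<in> carrier (free_grp r)"
  then show "\<one>\<^bsub>free_grp r\<^esub> \<otimes>\<^bsub>free_grp r\<^esub> x = x" by (simp add: free_grp_def)
next
  fix x assume x: "x \<in> carrier (free_grp r)"
  define y where "y = word_mult (rev (map letter_inv x)) []"
  have "set (rev (map letter_inv x)) \<subseteq> {1..r} \<times> UNIV"
    using x by (auto simp: free_grp_def letter_inv_def)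
  then have "set y \<subseteq> {1..r} \<times> UNIV"
    unfolding y_def by (intro word_mult_set) auto
  then have "y \<in> carrier (free_grp r)"
    unfolding free_grp_def by (auto simp: y_def intro: word_mult_reduced)
  moreover have "y \<otimes>\<^bsub>free_grp r\<^esub> x = \<one>\<^bsub>free_grp r\<^esub>"
    using x by (simp add: free_grp_def y_def word_mult_assoc word_mult_inv)
  ultimately show "\<exists>y\<in>carrier (free_grp r). y \<otimes>\<^bsub>free_grp r\<^esub> x = \<one>\<^bsub>free_grp r\<^esub>" by blast
qed



abbreviation "lval j l \<equiv> (if fst l = j then (if snd l then 1 else -1) else (0::int))"

lemma exp_sum_Nil[simp]: "exp_sum j [] = 0" by (simp add: exp_sum_def)
lemma exp_sum_Cons[simp]: "exp_sum j (l # w) = lval j l + exp_sum j w" by (simp add: exp_sum_def)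

lemma exp_sum_cons_red: "exp_sum j (cons_red l w) = lval j l + exp_sum j w"
  by (cases w) (auto simp: letter_inv_def)

lemma exp_sum_word_mult: "exp_sum j (word_mult v w) = exp_sum j v + exp_sum j w"
  by (induction v) (simp_all add: exp_sum_cons_red)

lemma exp_sum_inv:
  assumes "w \<in> carrier (free_grp r)"
  shows "exp_sum j (inv\<^bsub>free_grp r\<^esub> w) = - exp_sum j w"
proof -
  have "inv\<^bsub>free_grp r\<^esub> w \<otimes>\<^bsub>free_grp r\<^esub> w = \<one>\<^bsub>free_grp r\<^esub>"
    using group.l_inv[OF group_free_grp assms] .
  then have "word_mult (inv\<^bsub>free_grp r\<^esub> w) w = []" by (simp add: free_grp_def)
  then have "exp_sum j (word_mult (inv\<^bsub>free_grp r\<^esub> w) w) = 0" by simp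
  then show ?thesis by (simp add: exp_sum_word_mult)
qed

lemma group_FP: "group (FP n r)"
  unfolding FP_def by (simp add: group_free_grp)

lemma Kset_iff: "g \<in> Kset n r \<longleftrightarrow> g \<in> carrier (FP n r) \<and>
   (\<forall>j\<in>{1..r}. (\<Sum>alpha\<in>{1..n}. exp_sum j (g alpha)) = 0)"
  unfolding Kset_def psi_def
  by (auto simp: fun_eq_iff restrict_def split: if_splits)

lemma subgroup_Kset: "subgroup (Kset n r) (FP n r)"
proof (rule group.subgroupI[OF group_FP])
  show "Kset n r \<subseteq> carrier (FP n r)" by (auto simp: Kset_iff)
next
  have "\<one>\<^bsub>FP n r\<^esub> \<in> Kset n r"
    by (auto simp: Kset_iff group.is_monoid[OF group_FP] FP_def free_grp_def)
  then show "Kset n r \<noteq> {}" by blast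
next
  fix a assume a: "a \<in> Kset n r"
  then have ac: "a \<in> (\<Pi>\<^sub>E i\<in>{1..n}. carrier (free_grp r))" by (simp add: Kset_iff FP_def)
  have inv: "inv\<^bsub>FP n r\<^esub> a = (\<lambda>i\<in>{1..n}. inv\<^bsub>free_grp r\<^esub> a i)"
    unfolding FP_def by (rule inv_product_group[OF ac group_free_grp])
  have "inv\<^bsub>FP n r\<^esub> a \<in> carrier (FP n r)"
    using a group.inv_closed[OF group_FP] by (auto simp: Kset_iff)
  moreover have "(\<Sum>alpha\<in>{1..n}. exp_sum j ((inv\<^bsub>FP n r\<^esub> a) alpha)) = 0" if "j \<in> {1..r}" for j
  proof -
    have "(\<Sum>alpha\<in>{1..n}. exp_sum j ((inv\<^bsub>FP n r\<^esub> a) alpha)) = (\<Sum>alpha\<in>{1..n}. - exp_sum j (a alpha))"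
      using ac by (intro sum.cong) (auto simp: inv intro!: exp_sum_inv)
    also have "\<dots> = 0" using a that by (simp add: Kset_iff sum_negf)
    finally show ?thesis .
  qed
  ultimately show "inv\<^bsub>FP n r\<^esub> a \<in> Kset n r" by (simp add: Kset_iff)
next
  fix a b assume a: "a \<in> Kset n r" and b: "b \<in> Kset n r"
  have "a \<otimes>\<^bsub>FP n r\<^esub> b \<in> carrier (FP n r)"
    using a b group.is_monoid[OF group_FP] by (auto simp: Kset_iff monoid.m_closed)
  moreover have "(\<Sum>alpha\<in>{1..n}. exp_sum j ((a \<otimes>\<^bsub>FP n r\<^esub> b) alpha)) = 0" if "j \<in> {1..r}" for j
  proof -
    have "(\<Sum>alpha\<in>{1..n}. exp_sum j ((a \<otimes>\<^bsub>FP n r\<^esub> b) alpha)) =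
          (\<Sum>alpha\<in>{1..n}. exp_sum j (a alpha) + exp_sum j (b alpha))"
      by (intro sum.cong) (auto simp: FP_def free_grp_def exp_sum_word_mult)
    also have "\<dots> = 0" using a b that by (simp add: Kset_iff sum.distrib)
    finally show ?thesis .
  qed
  ultimately show "a \<otimes>\<^bsub>FP n r\<^esub> b \<in> Kset n r" by (simp add: Kset_iff)
qed

lemma group_Kgrp: "group (Kgrp n r)"
  unfolding Kgrp_def by (rule group.subgroup_imp_group[OF group_FP subgroup_Kset])



lemma inv_single:
  assumes "k \<in> {1..r}"
  shows "inv\<^bsub>free_grp r\<^esub> [(k, s)] = [(k, \<not> s)]"
  by (rule group.inv_equality[OF group_free_grp]) (use assms in \<open>auto simp: free_grp_def letter_inv_def\<close>)

lemma inv_Nil: "inv\<^bsub>free_grp r\<^esub> [] = []"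
  using monoid.inv_one[OF group.is_monoid[OF group_free_grp], of r] by (simp add: free_grp_def)

lemma gen_a_carrier: "j \<in> {1..r} \<Longrightarrow> gen_a n alpha j \<in> carrier (FP n r)"
  by (auto simp: gen_a_def FP_def free_grp_def)

lemma gen_x_comp:
  assumes "c \<in> {1..n}" "alpha \<noteq> n" "j \<in> {1..r}"
  shows "gen_x n r alpha j c = (if c = alpha then [(j, True)] else if c = n then [(j, False)] else [])"
proof -
  define I where "I = inv\<^bsub>FP n r\<^esub> (gen_a n n j)"
  have "I = (\<lambda>i\<in>{1..n}. inv\<^bsub>free_grp r\<^esub> (gen_a n n j i))"
    using gen_a_carrier[OF assms(3), of n n] unfolding FP_def I_def
    by (intro inv_product_group) (auto simp: group_free_grp)
  then have Ic: "I c = (if c = n then [(j, False)] else [])"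
    using assms by (auto simp: gen_a_def inv_single inv_Nil)
  have "gen_x n r alpha j c = word_mult (gen_a n alpha j c) (I c)"
    using assms(1) by (simp add: gen_x_def I_def[symmetric]) (simp add: FP_def free_grp_def)
  then show ?thesis using assms Ic
    by (auto simp: gen_a_def)
qed

lemma gen_x_Kset:
  assumes "alpha \<in> {1..n}" "alpha \<noteq> n" "j \<in> {1..r}"
  shows "gen_x n r alpha j \<in> Kset n r"
proof -
  have car: "gen_x n r alpha j \<in> carrier (FP n r)"
    unfolding gen_x_def using assms
    by (meson gen_a_carrier group.inv_closed group.subgroupE(4) group.subgroup_self group_FP)
  have "(\<Sum>c\<in>{1..n}. exp_sum j' (gen_x n r alpha j c)) = 0" for j'
  proof -
    have "(\<Sum>c\<in>{1..n}. exp_sum j' (gen_x n r alpha j c)) =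
      (\<Sum>c\<in>{1..n}. (if c = alpha then lval j' (j, True) else 0) + (if c = n then lval j' (j, False) else 0))"
      using assms by (intro sum.cong) (auto simp: gen_x_comp)
    also have "\<dots> = 0" using assms by (simp add: sum.distrib)
    finally show ?thesis .
  qed
  then show ?thesis using car by (simp add: Kset_iff)
qed

lemma reduced_map:
  assumes "reduced_word ws" "inj_on phi S" "set ws \<subseteq> S \<times> UNIV"
  shows "reduced_word (map (\<lambda>(x, e). (phi x, e = s)) ws)"
  using assms
proof (induction ws rule: reduced_word.induct)
  case (3 x e y f ws)
  then have "\<not> (phi x = phi y \<and> (e = s) \<noteq> (f = s))"
    by (auto dest: inj_onD)
  then show ?case using 3 by auto
qed auto

lemma main:
  assumes S: "S \<subseteq> Kset n r" and c: "c \<in> {1..n}"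
    and phi: "\<And>x. x \<in> S \<Longrightarrow> x c = [(phi x, s)] \<and> phi x \<in> {1..r}"
    and inj: "inj_on phi S"
  shows "is_free_group (subgroup_generated (Kgrp n r) S)"
proof -
  interpret K: group "Kgrp n r" by (rule group_Kgrp)
  define G where "G = subgroup_generated (Kgrp n r) S"
  have grpG: "group G" unfolding G_def by simp
  have carK: "carrier (Kgrp n r) = Kset n r" by (simp add: Kgrp_def)
  have SG: "S \<subseteq> carrier G"
    unfolding G_def by (rule K.subgroup_generated_subset_carrier_subset) (use S carK in auto)
  have genG: "generate G S = carrier G"
  proof -
    have "carrier (subgroup_generated G S) = carrier G" unfolding G_def by simp
    then show ?thesis using SG by (simp add: carrier_subgroup_generated Int_absorb1)
  qed
  have SF: "S \<subseteq> carrier (FP n r)" using S subgroup.subset[OF subgroup_Kset] by blast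
  have invG: "inv\<^bsub>G\<^esub> x = inv\<^bsub>FP n r\<^esub> x" if "x \<in> S" for x
  proof -
    have "inv\<^bsub>G\<^esub> x = inv\<^bsub>Kgrp n r\<^esub> x" unfolding G_def
      by (rule K.inv_subgroup_generated) (use SG that G_def in auto)
    also have "\<dots> = inv\<^bsub>FP n r\<^esub> x" unfolding Kgrp_def
      by (rule group.m_inv_consistent[OF group_FP subgroup_Kset]) (use S that in auto)
    finally show ?thesis .
  qed
  have multG: "monoid.mult G = monoid.mult (FP n r)" by (simp add: G_def Kgrp_def)
  have oneG: "one G = one (FP n r)" unfolding G_def one_subgroup_generated Kgrp_def by simp
  have weG: "word_eval G ws = word_eval (FP n r) ws" if "set ws \<subseteq> S \<times> UNIV" for ws
    using that by (induction ws) (auto simp: word_eval_def invG multG oneG)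
  have weF: "word_eval (FP n r) ws \<in> carrier (FP n r) \<and>
      word_eval (FP n r) ws c = foldr cons_red (map (\<lambda>(x, e). (phi x, e = s)) ws) []"
    if "set ws \<subseteq> S \<times> UNIV" for ws
    using that
  proof (induction ws)
    case Nil
    then show ?case using c group.is_monoid[OF group_FP, of n r]
      by (simp add: word_eval_def monoid.one_closed) (simp add: FP_def free_grp_def)
  next
    case (Cons a ws)
    obtain x e where a: "a = (x, e)" by force
    have x: "x \<in> S" using Cons a by auto
    have xF: "x \<in> carrier (FP n r)" using x SF by auto
    define y where "y = (if e then x else inv\<^bsub>FP n r\<^esub> x)"
    have yF: "y \<in> carrier (FP n r)" using xF group.inv_closed[OF group_FP] by (auto simp: y_def)
    have yc: "y c = [(phi x, e = s)]"
    proof (cases e)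
      case False
      have "inv\<^bsub>FP n r\<^esub> x = (\<lambda>i\<in>{1..n}. inv\<^bsub>free_grp r\<^esub> (x i))"
        using xF unfolding FP_def by (intro inv_product_group) (auto simp: group_free_grp)
      then show ?thesis using False c phi[OF x] by (simp add: y_def inv_single)
    qed (use phi[OF x] in \<open>simp add: y_def\<close>)
    have IH: "word_eval (FP n r) ws \<in> carrier (FP n r)"
       "word_eval (FP n r) ws c = foldr cons_red (map (\<lambda>(x, e). (phi x, e = s)) ws) []"
      using Cons by auto
    have eq: "word_eval (FP n r) (a # ws) = y \<otimes>\<^bsub>FP n r\<^esub> word_eval (FP n r) ws"
      by (simp add: word_eval_def a y_def)
    show ?case
      unfolding eq using yF IH group.is_monoid[OF group_FP, of n r] c yc
      by (auto simp: monoid.m_closed a) (simp add: FP_def free_grp_def)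
  qed
  have "free_basis G S"
    unfolding free_basis_def
  proof (intro conjI allI impI SG genG)
    fix ws :: "((nat \<Rightarrow> (nat \<times> bool) list) \<times> bool) list"
    assume ws: "ws \<noteq> [] \<and> set ws \<subseteq> S \<times> UNIV \<and> reduced_word ws"
    have red: "reduced_word (map (\<lambda>(x, e). (phi x, e = s)) ws)"
      using ws reduced_map inj by blast
    have "word_eval G ws c = map (\<lambda>(x, e). (phi x, e = s)) ws"
      using ws weG weF foldr_cons_red_Nil[OF red] by simp
    moreover have "\<one>\<^bsub>G\<^esub> c = []" using c by (simp add: oneG FP_def free_grp_def)
    ultimately show "word_eval G ws \<noteq> \<one>\<^bsub>G\<^esub>" using ws by auto
  qed
  then show ?thesis using grpG G_def is_free_group_def by blast
qed



theorem lemma3p1: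
  fixes n r :: nat
  assumes "n \<ge> r + 2"
  shows "(\<forall>i\<in>{1..n-1}. is_free_group
            (subgroup_generated (Kgrp n r) ((\<lambda>j. gen_x n r i j) ` {1..r})))
       \<and> is_free_group (subgroup_generated (Kgrp n r) ((\<lambda>i. gen_x n r i i) ` {1..r}))"
proof (intro conjI ballI)
  fix i assume i: "i \<in> {1..n-1}"
  have iv: "i \<in> {1..n}" "i \<noteq> n" using i by auto
  have comp: "gen_x n r i j i = [(j, True)]" if "j \<in> {1..r}" for j
    using gen_x_comp[OF iv(1) iv(2) that] by simp
  show "is_free_group (subgroup_generated (Kgrp n r) ((\<lambda>j. gen_x n r i j) ` {1..r}))"
  proof (rule main[where c = i and phi = "\<lambda>x. fst (hd (x i))" and s = True])
    show "(\<lambda>j. gen_x n r i j) ` {1..r} \<subseteq> Kset n r" using gen_x_Kset[OF iv] by auto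
    show "i \<in> {1..n}" by (rule iv)
    show "\<And>x. x \<in> (\<lambda>j. gen_x n r i j) ` {1..r} \<Longrightarrow> x i = [(fst (hd (x i)), True)] \<and> fst (hd (x i)) \<in> {1..r}"
      using comp by auto
    show "inj_on (\<lambda>x. fst (hd (x i))) ((\<lambda>j. gen_x n r i j) ` {1..r})"
      by (rule inj_onI) (auto simp: comp)
  qed
next
  have iv: "i \<in> {1..n}" "i \<noteq> n" if "i \<in> {1..r}" for i using that assms by auto
  have comp: "gen_x n r i i n = [(i, False)]" if "i \<in> {1..r}" for i
    using gen_x_comp[where c=n and alpha=i and j=i and n=n and r=r] iv[OF that] that assms by simp
  show "is_free_group (subgroup_generated (Kgrp n r) ((\<lambda>i. gen_x n r i i) ` {1..r}))"
  proof (rule main[where c = n and phi = "\<lambda>x. fst (hd (x n))" and s = False])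
    show "(\<lambda>i. gen_x n r i i) ` {1..r} \<subseteq> Kset n r" using gen_x_Kset iv by auto
    show "n \<in> {1..n}" using assms by auto
    show "\<And>x. x \<in> (\<lambda>i. gen_x n r i i) ` {1..r} \<Longrightarrow> x n = [(fst (hd (x n)), False)] \<and> fst (hd (x n)) \<in> {1..r}"
      using comp by auto
    show "inj_on (\<lambda>x. fst (hd (x n))) ((\<lambda>i. gen_x n r i i) ` {1..r})"
      by (rule inj_onI) (auto simp: comp)
  qed
qed

end
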